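(* Let $n\ge 2$ and let $P$ be an $n\times n$ permutation matrix which is the leaf matrix of exactly one CNM of size $n$. Then $P$ has no nonzero entry on the main diagonal, i.e. $P_{i,i}=0$ for all $i$.
   Context: A complete non-ambiguous matrix (CNM) of size $n$ is an $n\times n$ matrix $M=(m_{i,j})$ with entries in $\{0,1\}$ whose support $T=\{(i,j): m_{i,j}=1\}$ (whose elements are called vertices) satisfies: (1) $(1,1)\in T$; (2) for every $p=(i,j)\in T$ with $p\neq(1,1)$, exactly one of the following holds: there is $(i',j)\in T$ with $i'<i$, or there is $(i,j')\in T$ with $j'<j$; (3) every row and every column of $M$ contains at least one vertex; (4) define the parent of $p=(i,j)\neq(1,1)$ to be $(i',j)$ with $i'<i$ maximal if such a vertex exists, and otherwise $(i,j')$ with $j'<j$ maximal; then every vertex is the parent of either zero or exactly two vertices. A vertex with no children is a leaf. The leaf matrix $p(M)$ is obtained from $M$ by replacing all non-leaf vertices by $0$ (it is a permutation matrix). A permutation matrix $P$ is "the leaf matrix of exactly one CNM" if there is exactly one CNM $M$ with $p(M)=P$. *)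

theory Defs
  imports Main
begin

text \<open>An n x n 0/1 matrix is represented by its support: a set of positions (i,j)
  with 1 \<le> i,j \<le> n (1-based indices).\<close>

type_synonym pos = "nat \<times> nat"

definition parent :: "pos set \<Rightarrow> pos \<Rightarrow> pos" where
  "parent T p = (case p of (i, j) \<Rightarrow>
     if (\<exists>i'<i. (i', j) \<in> T) then (Max {i'. i' < i \<and> (i', j) \<in> T}, j)
     else (i, Max {j'. j' < j \<and> (i, j') \<in> T}))"

definition children :: "pos set \<Rightarrow> pos \<Rightarrow> pos set" where
  "children T p = {q \<in> T. q \<noteq> (1, 1) \<and> parent T q = p}"

definition is_CNM :: "nat \<Rightarrow> pos set \<Rightarrow> bool" where
  "is_CNM n T \<longleftrightarrow>
     T \<subseteq> {1..n} \<times> {1..n} \<and>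
     (1, 1) \<in> T \<and>
     (\<forall>(i, j) \<in> T. (i, j) \<noteq> (1, 1) \<longrightarrow>
        ((\<exists>i'<i. (i', j) \<in> T) \<noteq> (\<exists>j'<j. (i, j') \<in> T))) \<and>
     (\<forall>i \<in> {1..n}. \<exists>j. (i, j) \<in> T) \<and>
     (\<forall>j \<in> {1..n}. \<exists>i. (i, j) \<in> T) \<and>
     (\<forall>p \<in> T. card (children T p) = 0 \<or> card (children T p) = 2)"

definition leaf_matrix :: "pos set \<Rightarrow> pos set" where
  "leaf_matrix T = {p \<in> T. children T p = {}}"

definition is_perm_matrix :: "nat \<Rightarrow> pos set \<Rightarrow> bool" where
  "is_perm_matrix n P \<longleftrightarrow>
     P \<subseteq> {1..n} \<times> {1..n} \<and>
     (\<forall>i \<in> {1..n}. \<exists>!j. (i, j) \<in> P) \<and>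
     (\<forall>j \<in> {1..n}. \<exists>!i. (i, j) \<in> P)"

end

theory Submission
  imports Defs
begin

definition ab :: "pos set \<Rightarrow> nat \<Rightarrow> nat \<Rightarrow> bool" where "ab T i j = (\<exists>i'<i. (i',j)\<in>T)"
definition lf :: "pos set \<Rightarrow> nat \<Rightarrow> nat \<Rightarrow> bool" where "lf T i j = (\<exists>j'<j. (i,j')\<in>T)"
definition rt :: "pos set \<Rightarrow> nat \<Rightarrow> nat \<Rightarrow> bool" where "rt T i j = (\<exists>j'>j. (i,j')\<in>T)"
definition bl :: "pos set \<Rightarrow> nat \<Rightarrow> nat \<Rightarrow> bool" where "bl T i j = (\<exists>i'>i. (i',j)\<in>T)"

definition NA :: "pos set \<Rightarrow> bool" where
  "NA T = (\<forall>i j. (i,j)\<in>T \<longrightarrow> (i,j)\<noteq>(1,1) \<longrightarrow> ab T i j \<noteq> lf T i j)"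

definition NR :: "pos set \<Rightarrow> nat \<Rightarrow> nat \<Rightarrow> pos set" where
  "NR T i j = {(i,m) | m. m>j \<and> (i,m)\<in>T \<and> (\<forall>j'. j<j' \<and> j'<m \<longrightarrow> (i,j')\<notin>T)}"
definition NB :: "pos set \<Rightarrow> nat \<Rightarrow> nat \<Rightarrow> pos set" where
  "NB T i j = {(m,j) | m. m>i \<and> (m,j)\<in>T \<and> (\<forall>i'. i<i' \<and> i'<m \<longrightarrow> (i',j)\<notin>T)}"

lemma fin_below: "finite {x::nat. x < i \<and> P x}" by (rule finite_subset[of _ "{..<i}"]) auto

lemma parent_ab: "ab T x y \<Longrightarrow> parent T (x,y) = (Max {i'. i' < x \<and> (i', y) \<in> T}, y)"
  unfolding parent_def ab_def by auto
lemma parent_nab: "\<not> ab T x y \<Longrightarrow> parent T (x,y) = (x, Max {j'. j' < y \<and> (x, j') \<in> T})"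
  unfolding parent_def ab_def by auto

lemma children_char:
  assumes box: "T \<subseteq> {1..n}\<times>{1..n}" and na: "NA T" and p: "(i,j)\<in>T"
  shows "children T (i,j) = NR T i j \<union> NB T i j"
proof (rule set_eqI, safe)
  fix x y assume q: "(x,y) \<in> children T (i,j)" and nr: "(x,y) \<notin> NB T i j"
  from q have qT: "(x,y)\<in>T" and q1: "(x,y)\<noteq>(1,1)" and par: "parent T (x,y) = (i,j)"
    by (auto simp: children_def)
  show "(x,y) \<in> NR T i j"
  proof (cases "ab T x y")
    case True
    let ?S = "{i'. i' < x \<and> (i', y) \<in> T}"
    have ne: "?S \<noteq> {}" using True by (auto simp: ab_def)
    have fin: "finite ?S" by (rule fin_below)
    have eq: "Max ?S = i" "y = j" using par parent_ab[OF True] by auto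
    have "i \<in> ?S" using Max_in[OF fin ne] eq by simp
    hence "i < x" by simp
    moreover have "\<forall>i'. i<i' \<and> i'<x \<longrightarrow> (i',j)\<notin>T"
      using Max_ge[OF fin] eq by fastforce
    ultimately have "(x,y) \<in> NB T i j" using qT eq by (auto simp: NB_def)
    with nr show ?thesis by simp
  next
    case False
    with na qT q1 have L: "lf T x y" by (auto simp: NA_def)
    let ?S = "{j'. j' < y \<and> (x, j') \<in> T}"
    have ne: "?S \<noteq> {}" using L by (auto simp: lf_def)
    have fin: "finite ?S" by (rule fin_below)
    have eq: "Max ?S = j" "x = i" using par parent_nab[OF False] by auto
    have "j \<in> ?S" using Max_in[OF fin ne] eq by simp
    hence "j < y" by simp
    moreover have "\<forall>j'. j<j' \<and> j'<y \<longrightarrow> (i,j')\<notin>T"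
      using Max_ge[OF fin] eq by fastforce
    ultimately show ?thesis using qT eq by (auto simp: NR_def)
  qed
next
  fix x y assume "(x,y) \<in> NR T i j"
  then have xy: "x = i" "y > j" "(i,y)\<in>T" and gap: "\<forall>j'. j<j' \<and> j'<y \<longrightarrow> (i,j')\<notin>T"
    by (auto simp: NR_def)
  have j1: "j \<ge> 1" using p box by auto
  have L: "lf T i y" using xy p unfolding lf_def by auto
  have ne1: "(i,y) \<noteq> (1,1)" using xy j1 by auto
  hence nab: "\<not> ab T i y" using na L xy by (auto simp: NA_def)
  let ?S = "{j'. j' < y \<and> (i, j') \<in> T}"
  have "Max ?S = j"
    by (rule Max_eqI[OF fin_below]) (use gap xy p in \<open>auto simp: not_less[symmetric]\<close>)
  hence "parent T (i,y) = (i,j)" using parent_nab[OF nab] by simp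
  thus "(x,y) \<in> children T (i,j)" using xy ne1 by (auto simp: children_def)
next
  fix x y assume "(x,y) \<in> NB T i j"
  then have xy: "y = j" "x > i" "(x,j)\<in>T" and gap: "\<forall>i'. i<i' \<and> i'<x \<longrightarrow> (i',j)\<notin>T"
    by (auto simp: NB_def)
  have A: "ab T x j" using xy p unfolding ab_def by auto
  let ?S = "{i'. i' < x \<and> (i', j) \<in> T}"
  have "Max ?S = i"
    by (rule Max_eqI[OF fin_below]) (use gap xy p in \<open>auto simp: not_less[symmetric]\<close>)
  hence "parent T (x,j) = (i,j)" using parent_ab[OF A] by simp
  moreover have "(x,j) \<noteq> (1,1)" using xy p box by auto
  ultimately show "(x,y) \<in> children T (i,j)" using xy by (auto simp: children_def)
qed

lemma NR_mem: "(a,b) \<in> NR T i j \<longleftrightarrow> a = i \<and> b>j \<and> (i,b)\<in>T \<and> (\<forall>j'. j<j' \<and> j'<b \<longrightarrow> (i,j')\<notin>T)"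
  unfolding NR_def by blast
lemma NB_mem: "(a,b) \<in> NB T i j \<longleftrightarrow> b = j \<and> a>i \<and> (a,j)\<in>T \<and> (\<forall>i'. i<i' \<and> i'<a \<longrightarrow> (i',j)\<notin>T)"
  unfolding NB_def by blast

lemma NR_eq: "rt T i j \<Longrightarrow> NR T i j = {(i, LEAST m. m>j \<and> (i,m)\<in>T)}"
proof -
  assume r: "rt T i j"
  define m where "m = (LEAST m. m>j \<and> (i,m)\<in>T)"
  obtain k where k: "k>j \<and> (i,k)\<in>T" using r unfolding rt_def by blast
  have m: "m > j \<and> (i,m)\<in>T" unfolding m_def by (rule LeastI[where P="\<lambda>m. m>j \<and> (i,m)\<in>T", OF k])
  have mle: "\<And>m'. m'>j \<and> (i,m')\<in>T \<Longrightarrow> m \<le> m'" unfolding m_def by (rule Least_le)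
  have gap: "\<forall>j'. j<j' \<and> j'<m \<longrightarrow> (i,j')\<notin>T"
    using mle by (meson not_le)
  have "NR T i j = {(i, m)}"
  proof (rule set_eqI)
    fix q :: pos
    obtain a b where qq: "q = (a,b)" by (cases q)
    show "q \<in> NR T i j \<longleftrightarrow> q \<in> {(i, m)}"
    proof
      assume "q \<in> NR T i j"
      then have q: "a = i" "b>j" "(i,b)\<in>T" "\<forall>j'. j<j' \<and> j'<b \<longrightarrow> (i,j')\<notin>T"
        unfolding qq NR_mem by auto
      have "m \<le> b" using q(2,3) by (intro mle) simp
      moreover have "\<not> m < b" using q(4) m by auto
      ultimately have "b = m" by simp
      thus "q \<in> {(i, m)}" using q qq by simp
    next
      assume "q \<in> {(i, m)}"
      thus "q \<in> NR T i j" unfolding qq NR_mem using m gap by simp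
    qed
  qed
  thus ?thesis unfolding m_def .
qed

lemma NB_eq: "bl T i j \<Longrightarrow> NB T i j = {(LEAST m. m>i \<and> (m,j)\<in>T, j)}"
proof -
  assume r: "bl T i j"
  define m where "m = (LEAST m. m>i \<and> (m,j)\<in>T)"
  obtain k where k: "k>i \<and> (k,j)\<in>T" using r unfolding bl_def by blast
  have m: "m > i \<and> (m,j)\<in>T" unfolding m_def by (rule LeastI[where P="\<lambda>m. m>i \<and> (m,j)\<in>T", OF k])
  have mle: "\<And>m'. m'>i \<and> (m',j)\<in>T \<Longrightarrow> m \<le> m'" unfolding m_def by (rule Least_le)
  have gap: "\<forall>i'. i<i' \<and> i'<m \<longrightarrow> (i',j)\<notin>T"
    using mle by (meson not_le)
  have "NB T i j = {(m, j)}"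
  proof (rule set_eqI)
    fix q :: pos
    obtain a b where qq: "q = (a,b)" by (cases q)
    show "q \<in> NB T i j \<longleftrightarrow> q \<in> {(m, j)}"
    proof
      assume "q \<in> NB T i j"
      then have q: "b = j" "a>i" "(a,j)\<in>T" "\<forall>i'. i<i' \<and> i'<a \<longrightarrow> (i',j)\<notin>T"
        unfolding qq NB_mem by auto
      have "m \<le> a" using q(2,3) by (intro mle) simp
      moreover have "\<not> m < a" using q(4) m by auto
      ultimately have "a = m" by simp
      thus "q \<in> {(m, j)}" using q qq by simp
    next
      assume "q \<in> {(m, j)}"
      thus "q \<in> NB T i j" unfolding qq NB_mem using m gap by simp
    qed
  qed
  thus ?thesis unfolding m_def .
qed

lemma NR_empty: "\<not> rt T i j \<Longrightarrow> NR T i j = {}" by (auto simp: NR_def rt_def)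
lemma NB_empty: "\<not> bl T i j \<Longrightarrow> NB T i j = {}" by (auto simp: NB_def bl_def)

lemma card_children:
  assumes box: "T \<subseteq> {1..n}\<times>{1..n}" and na: "NA T" and p: "(i,j)\<in>T"
  shows "card (children T (i,j)) = (if rt T i j then 1 else 0) + (if bl T i j then 1 else 0)"
proof -
  have d: "NR T i j \<inter> NB T i j = {}" by (auto simp: NR_def NB_def)
  have f: "finite (NR T i j)" "finite (NB T i j)"
    by (cases "rt T i j"; simp add: NR_eq NR_empty) (cases "bl T i j"; simp add: NB_eq NB_empty)
  have "card (children T (i,j)) = card (NR T i j) + card (NB T i j)"
    using children_char[OF assms] card_Un_disjoint[OF f d] by simp
  thus ?thesis by (cases "rt T i j"; cases "bl T i j"; simp add: NR_eq NR_empty NB_eq NB_empty)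
qed

lemma children_empty:
  assumes box: "T \<subseteq> {1..n}\<times>{1..n}" and na: "NA T" and p: "(i,j)\<in>T"
  shows "children T (i,j) = {} \<longleftrightarrow> \<not> rt T i j \<and> \<not> bl T i j"
  using children_char[OF assms]
  by (cases "rt T i j"; cases "bl T i j"; simp add: NR_eq NR_empty NB_eq NB_empty)

definition CNM2 :: "nat \<Rightarrow> pos set \<Rightarrow> bool" where
  "CNM2 n T = (T \<subseteq> {1..n}\<times>{1..n} \<and> (1,1)\<in>T \<and> NA T \<and> (\<forall>i\<in>{1..n}. \<exists>j. (i,j)\<in>T)
     \<and> (\<forall>j\<in>{1..n}. \<exists>i. (i,j)\<in>T) \<and> (\<forall>i j. (i,j)\<in>T \<longrightarrow> (rt T i j \<longleftrightarrow> bl T i j)))"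

lemma is_CNM_iff: "is_CNM n T \<longleftrightarrow> CNM2 n T"
proof -
  have na: "(\<forall>(i, j) \<in> T. (i, j) \<noteq> (1, 1) \<longrightarrow>
        ((\<exists>i'<i. (i', j) \<in> T) \<noteq> (\<exists>j'<j. (i, j') \<in> T))) = NA T"
    unfolding NA_def ab_def lf_def by blast
  have c: "T \<subseteq> {1..n}\<times>{1..n} \<Longrightarrow> NA T \<Longrightarrow>
     (\<forall>p \<in> T. card (children T p) = 0 \<or> card (children T p) = 2) = (\<forall>i j. (i,j)\<in>T \<longrightarrow> (rt T i j \<longleftrightarrow> bl T i j))"
  proof -
    assume b: "T \<subseteq> {1..n}\<times>{1..n}" and n: "NA T"
    show ?thesis
    proof (rule iffI)
      assume h: "\<forall>p \<in> T. card (children T p) = 0 \<or> card (children T p) = 2"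
      show "\<forall>i j. (i,j)\<in>T \<longrightarrow> (rt T i j \<longleftrightarrow> bl T i j)"
      proof (intro allI impI)
        fix i j assume "(i,j)\<in>T"
        thus "rt T i j \<longleftrightarrow> bl T i j" using h card_children[OF b n, of i j] by (auto split: if_splits)
      qed
    next
      assume a: "\<forall>i j. (i,j)\<in>T \<longrightarrow> (rt T i j \<longleftrightarrow> bl T i j)"
      show "\<forall>p \<in> T. card (children T p) = 0 \<or> card (children T p) = 2"
      proof
        fix p assume "p \<in> T"
        obtain i j where "p = (i,j)" by (cases p)
        thus "card (children T p) = 0 \<or> card (children T p) = 2" using a \<open>p\<in>T\<close> card_children[OF b n, of i j] by auto
      qed
    qed
  qed
  show ?thesis unfolding is_CNM_def CNM2_def na using c by blast
qed

lemma leaf_eq: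
  assumes box: "T \<subseteq> {1..n}\<times>{1..n}" and na: "NA T"
  shows "leaf_matrix T = {(i,j). (i,j)\<in>T \<and> \<not> rt T i j \<and> \<not> bl T i j}"
  unfolding leaf_matrix_def using children_empty[OF box na] by auto







definition LV :: "pos set \<Rightarrow> pos set" where
  "LV T = {(i,j). (i,j)\<in>T \<and> \<not> rt T i j \<and> \<not> bl T i j}"

definition tr :: "pos set \<Rightarrow> pos set" where "tr T = prod.swap ` T"

lemma tr_mem[simp]: "(i,j) \<in> tr T \<longleftrightarrow> (j,i) \<in> T"
  unfolding tr_def by force
lemma tr_tr[simp]: "tr (tr T) = T"
  unfolding tr_def by (simp add: image_image)
lemma tr_ab: "ab (tr T) i j = lf T j i" unfolding ab_def lf_def by simp
lemma tr_lf: "lf (tr T) i j = ab T j i" unfolding ab_def lf_def by simp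
lemma tr_rt: "rt (tr T) i j = bl T j i" unfolding rt_def bl_def by simp
lemma tr_bl: "bl (tr T) i j = rt T j i" unfolding rt_def bl_def by simp

lemma tr_CNM2: assumes "CNM2 n T" shows "CNM2 n (tr T)"
proof -
  have box: "T \<subseteq> {1..n}\<times>{1..n}" and r: "(1,1)\<in>T" and na: "NA T"
    and rows: "\<forall>i\<in>{1..n}. \<exists>j. (i,j)\<in>T" and cols: "\<forall>j\<in>{1..n}. \<exists>i. (i,j)\<in>T"
    and rb: "\<forall>i j. (i,j)\<in>T \<longrightarrow> (rt T i j \<longleftrightarrow> bl T i j)"
    using assms unfolding CNM2_def by blast+
  have "tr T \<subseteq> {1..n}\<times>{1..n}"
  proof
    fix q assume "q \<in> tr T"
    moreover obtain a b where "q = (a,b)" by (cases q)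
    ultimately show "q \<in> {1..n}\<times>{1..n}" using box by auto
  qed
  moreover have "NA (tr T)" using na unfolding NA_def tr_ab tr_lf tr_mem by fastforce
  moreover have "\<forall>i j. (i,j)\<in>tr T \<longrightarrow> (rt (tr T) i j \<longleftrightarrow> bl (tr T) i j)"
    using rb unfolding tr_rt tr_bl tr_mem by metis
  ultimately show ?thesis unfolding CNM2_def using r rows cols by simp
qed

lemma tr_LV: "LV (tr T) = tr (LV T)"
proof (rule set_eqI)
  fix q :: pos obtain a b where "q = (a,b)" by (cases q)
  thus "q \<in> LV (tr T) \<longleftrightarrow> q \<in> tr (LV T)" unfolding LV_def by (auto simp add: tr_rt tr_bl)
qed

lemma CNM2_leaf: "CNM2 n T \<Longrightarrow> leaf_matrix T = LV T"
  unfolding LV_def CNM2_def using leaf_eq by blast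


lemma CNM2_D:
  assumes "CNM2 n T"
  shows "T \<subseteq> {1..n}\<times>{1..n}" "(1,1)\<in>T" "NA T" "\<forall>i\<in>{1..n}. \<exists>j. (i,j)\<in>T"
    "\<forall>j\<in>{1..n}. \<exists>i. (i,j)\<in>T" "\<And>i j. (i,j)\<in>T \<Longrightarrow> rt T i j \<longleftrightarrow> bl T i j"
  using assms unfolding CNM2_def by blast+

lemma NA_D: "NA T \<Longrightarrow> (i,j)\<in>T \<Longrightarrow> (i,j)\<noteq>(1,1) \<Longrightarrow> ab T i j \<longleftrightarrow> \<not> lf T i j"
  unfolding NA_def by blast

lemma exists_low:
  assumes C: "CNM2 n T" and ii: "(i,i)\<in>T" and nb: "\<not> bl T i i"
    and a: "(a,i)\<in>T" "a<i"
  shows "\<exists>r c. (r,c)\<in>T \<and> r>i \<and> c<i"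
proof (rule ccontr)
  assume H: "\<not> (\<exists>r c. (r,c)\<in>T \<and> r>i \<and> c<i)"
  have H': "\<And>r c. (r,c)\<in>T \<Longrightarrow> r>i \<Longrightarrow> i \<le> c" using H by (meson not_le)
  note box = CNM2_D(1)[OF C] and rows = CNM2_D(4)[OF C] and rb = CNM2_D(6)[OF C]
  define f where "f r = Max {y. (r,y)\<in>T}" for r
  have fin: "finite {y. (r,y)\<in>T}" for r
    by (rule finite_subset[of _ "{1..n}"]) (use box in auto)
  have fT: "(r, f r)\<in>T" if "r\<in>{1..n}" for r
  proof -
    have "{y. (r,y)\<in>T} \<noteq> {}" using rows that by auto
    from Max_in[OF fin this] show ?thesis unfolding f_def by simp
  qed
  have fmax: "y \<le> f r" if "(r,y)\<in>T" for r y
    unfolding f_def by (rule Max_ge[OF fin]) (use that in simp)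
  have fnb: "\<not> bl T r (f r)" if "r\<in>{1..n}" for r
  proof -
    have "\<not> rt T r (f r)" unfolding rt_def using fmax by (meson not_le)
    thus ?thesis using rb[OF fT[OF that]] by simp
  qed
  have ai: "a \<in> {1..n}" using box a by auto
  have fa1: "i \<le> f a" using fmax[OF a(1)] .
  have fa2: "f a \<noteq> i"
  proof
    assume "f a = i"
    hence "\<not> bl T a i" using fnb[OF ai] by simp
    moreover have "bl T a i" unfolding bl_def using ii a by auto
    ultimately show False by simp
  qed
  have fan: "f a \<le> n" using box fT[OF ai] by auto
  let ?A = "{i+1..n}"
  have img: "f ` ?A \<subseteq> ?A"
  proof
    fix z assume "z \<in> f ` ?A"
    then obtain r where r: "r \<in> ?A" "z = f r" by blast
    have rn: "r \<in> {1..n}" using r by auto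
    have rT: "(r, f r)\<in>T" using fT[OF rn] .
    have "i \<le> f r" using H'[OF rT] r by auto
    moreover have "f r \<noteq> i"
    proof
      assume "f r = i"
      hence "(r,i)\<in>T" using rT by simp
      moreover have "r > i" using r by auto
      ultimately have "bl T i i" unfolding bl_def by blast
      thus False using nb by simp
    qed
    moreover have "f r \<le> n" using box rT by auto
    ultimately show "z \<in> ?A" using r by auto
  qed
  have inj: "inj_on f ?A"
  proof (rule inj_onI)
    fix r1 r2 assume r: "r1 \<in> ?A" "r2 \<in> ?A" "f r1 = f r2"
    show "r1 = r2"
    proof (rule ccontr)
      assume ne: "r1 \<noteq> r2"
      have rn: "r1 \<in> {1..n}" "r2 \<in> {1..n}" using r by auto
      show False
      proof (cases "r1 < r2")
        case True
        have "bl T r1 (f r1)" unfolding bl_def using fT[OF rn(2)] r(3) True by auto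
        thus False using fnb[OF rn(1)] by simp
      next
        case False
        hence "r2 < r1" using ne by simp
        have "bl T r2 (f r2)" unfolding bl_def using fT[OF rn(1)] r(3) \<open>r2 < r1\<close> by auto
        thus False using fnb[OF rn(2)] by simp
      qed
    qed
  qed
  have "f ` ?A = ?A" by (rule endo_inj_surj[OF _ img inj]) simp
  moreover have "f a \<in> ?A" using fa1 fa2 fan by auto
  ultimately obtain r where r: "r \<in> ?A" "f r = f a" by (metis imageE)
  have "(r, f a)\<in>T" using fT[of r] r by auto
  moreover have "r > a" using r a by auto
  ultimately have "bl T a (f a)" unfolding bl_def by blast
  thus False using fnb[OF ai] by simp
qed

lemma spanning:
  assumes C: "CNM2 n T" and R1: "R \<ge> 1" and rowR: "\<forall>y<i. (R,y)\<notin>T"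
    and v: "(r0,c0)\<in>T" "r0>R" "c0<i"
  shows "\<exists>c x y. c<i \<and> x<R \<and> R<y \<and> (x,c)\<in>T \<and> (y,c)\<in>T"
proof -
  define P where "P q \<longleftrightarrow> q\<in>T \<and> fst q > R \<and> snd q < i" for q :: pos
  have "P (r0,c0)" using v unfolding P_def by simp
  from ex_has_least_nat[of P, OF this, of "\<lambda>q. fst q + snd q"]
  obtain q where Pq: "P q" and qmin: "\<And>q'. P q' \<Longrightarrow> fst q + snd q \<le> fst q' + snd q'" by blast
  obtain y c where qq: "q = (y,c)" by (cases q)
  have yc: "(y,c)\<in>T" "y>R" "c<i" using Pq qq unfolding P_def by auto
  have ne: "(y,c)\<noteq>(1,1)" using yc R1 by auto
  have nl: "\<not> lf T y c"
  proof
    assume "lf T y c"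
    then obtain c' where c': "c'<c" "(y,c')\<in>T" unfolding lf_def by blast
    have "P (y,c')" unfolding P_def using c' yc by auto
    from qmin[OF this] qq c' show False by simp
  qed
  hence "ab T y c" using NA_D[OF CNM2_D(3)[OF C] yc(1) ne] by simp
  then obtain x where x: "x<y" "(x,c)\<in>T" unfolding ab_def by blast
  have "x \<noteq> R" using rowR x yc by auto
  moreover have "\<not> x > R"
  proof
    assume "x > R"
    hence "P (x,c)" unfolding P_def using x yc by auto
    from qmin[OF this] qq x show False by simp
  qed
  ultimately have "x < R" by simp
  thus ?thesis using x yc by blast
qed


lemma caseA:
  assumes C: "CNM2 n T" and ii: "(i,i)\<in>T" and i2: "i \<ge> 2"
    and nr: "\<not> rt T i i" and nb: "\<not> bl T i i" and nl: "\<not> lf T i i"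
  shows "\<exists>T'. CNM2 n T' \<and> LV T' = LV T \<and> T' \<noteq> T"
proof -
  note box = CNM2_D(1)[OF C] and r11 = CNM2_D(2)[OF C] and na = CNM2_D(3)[OF C]
    and rows = CNM2_D(4)[OF C] and cols = CNM2_D(5)[OF C] and rb = CNM2_D(6)[OF C]
  have iab: "ab T i i" using NA_D[OF na ii] i2 nl by auto
  define a where "a = Max {x. x<i \<and> (x,i)\<in>T}"
  have fin: "finite {x. x<i \<and> (x,i)\<in>T}" by (rule fin_below)
  have ne: "{x. x<i \<and> (x,i)\<in>T} \<noteq> {}" using iab unfolding ab_def by auto
  have aT: "(a,i)\<in>T" "a<i" using Max_in[OF fin ne] unfolding a_def by auto
  have agap: "(x,i)\<notin>T" if "a<x" "x<i" for x
  proof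
    assume "(x,i)\<in>T"
    hence "x \<le> a" unfolding a_def using that by (intro Max_ge[OF fin]) simp
    thus False using that by simp
  qed
  have colI: "x = i" if "(x,i)\<in>T" "a<x" for x
  proof -
    have "\<not> x < i" using agap that by blast
    moreover have "\<not> x > i" using nb that unfolding bl_def by blast
    ultimately show ?thesis by simp
  qed
  define K where "K \<longleftrightarrow> (\<exists>x<a. (x,i)\<in>T)"
  define R where "R = (if K then a else i)"
  have a1: "a \<ge> 1" "a \<le> n" "i \<le> n" using box aT ii by auto
  have pne: "(a,i) \<noteq> (1,1)" using i2 by auto
  have rowR: "\<forall>y<i. (R,y)\<notin>T"
  proof (cases K)
    case True
    hence "ab T a i" unfolding K_def ab_def by blast
    hence "\<not> lf T a i" using NA_D[OF na aT(1) pne] by simp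
    thus ?thesis using True unfolding R_def lf_def by auto
  next
    case False
    thus ?thesis using nl unfolding R_def lf_def by auto
  qed
  have R1: "R \<ge> 1" "R \<le> i" "R \<le> n" using a1 aT unfolding R_def by auto
  obtain r0 c0 where rc: "(r0,c0)\<in>T" "r0>i" "c0<i" using exists_low[OF C ii nb aT] by blast
  have "r0 > R" using rc R1 by simp
  from spanning[OF C R1(1) rowR rc(1) this rc(3)]
  obtain c x y where cxy: "c<i" "x<R" "R<y" "(x,c)\<in>T" "(y,c)\<in>T" by blast
  have pbl: "bl T a i" unfolding bl_def using ii aT by auto
  hence "rt T a i" using rb[OF aT(1)] by simp
  then obtain b where b: "b>i" "(a,b)\<in>T" unfolding rt_def by blast
  have aleft: "\<exists>l<i. (a,l)\<in>T" if "\<not> K"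
  proof -
    have "\<not> ab T a i" using that unfolding K_def ab_def by blast
    hence "lf T a i" using NA_D[OF na aT(1) pne] by simp
    thus ?thesis unfolding lf_def by blast
  qed
  define T' where "T' = (T - {(a,i)}) \<union> {(R,c)}"
  have mem: "q \<in> T' \<longleftrightarrow> (q\<in>T \<and> q\<noteq>(a,i)) \<or> q = (R,c)" for q
    unfolding T'_def by blast
  have sT: "(R,c)\<notin>T" using rowR cxy by blast
  have c1: "c \<ge> 1" "c \<le> n" using box cxy by auto
  have ci: "c \<noteq> i" using cxy by simp

  have L_ab: "ab T' u v \<longleftrightarrow> ab T u v" if uv: "(u,v)\<in>T" "(u,v)\<noteq>(a,i)" "\<not>(\<not>K \<and> (u,v)=(i,i))" for u v
  proof
    assume "ab T' u v"
    then obtain x' where x': "x'<u" "(x',v)\<in>T'" unfolding ab_def by blast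
    show "ab T u v"
    proof (cases "(x',v)\<in>T")
      case True thus ?thesis using x' unfolding ab_def by blast
    next
      case False
      hence "x' = R" "v = c" using x' mem by auto
      thus ?thesis using cxy x' unfolding ab_def by (metis order.strict_trans)
    qed
  next
    assume "ab T u v"
    then obtain x' where x': "x'<u" "(x',v)\<in>T" unfolding ab_def by blast
    show "ab T' u v"
    proof (cases "(x',v) = (a,i)")
      case False thus ?thesis using x' mem unfolding ab_def by blast
    next
      case True
      hence xv: "x' = a" "v = i" by auto
      hence "u = i" using colI uv x' by simp
      hence K using uv xv by auto
      then obtain x0 where x0: "x0<a" "(x0,i)\<in>T" unfolding K_def by blast
      have "(x0,i)\<in>T'" using x0 mem by auto
      moreover have "x0 < u" using x0 x' xv by simp
      ultimately show ?thesis unfolding ab_def using xv by blast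
    qed
  qed

  have L_lf: "lf T' u v \<longleftrightarrow> lf T u v" if uv: "(u,v)\<in>T" "(u,v)\<noteq>(a,i)" "\<not>(\<not>K \<and> (u,v)=(i,i))" for u v
  proof
    assume "lf T' u v"
    then obtain y' where y': "y'<v" "(u,y')\<in>T'" unfolding lf_def by blast
    show "lf T u v"
    proof (cases "(u,y')\<in>T")
      case True thus ?thesis using y' unfolding lf_def by blast
    next
      case False
      hence uy: "u = R" "y' = c" using y' mem by auto
      have "\<not> v < i" using rowR uv uy by auto
      moreover have "v \<noteq> i"
      proof
        assume "v = i"
        thus False using uv uy unfolding R_def by (cases K) auto
      qed
      ultimately have vi: "v > i" by simp
      show ?thesis
      proof (cases K)
        case True
        hence "u = a" using uy unfolding R_def by simp
        thus ?thesis using aT vi unfolding lf_def by blast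
      next
        case False
        hence "u = i" using uy unfolding R_def by simp
        hence "rt T i i" using uv vi unfolding rt_def by blast
        thus ?thesis using nr by simp
      qed
    qed
  next
    assume "lf T u v"
    then obtain y' where y': "y'<v" "(u,y')\<in>T" unfolding lf_def by blast
    show "lf T' u v"
    proof (cases "(u,y') = (a,i)")
      case False thus ?thesis using y' mem unfolding lf_def by blast
    next
      case True
      hence uy: "u = a" "y' = i" by auto
      show ?thesis
      proof (cases K)
        case True
        hence "(a,c)\<in>T'" using mem unfolding R_def by simp
        thus ?thesis using uy y' cxy unfolding lf_def by (metis order.strict_trans)
      next
        case False
        then obtain l where l: "l<i" "(a,l)\<in>T" using aleft by blast
        hence "(a,l)\<in>T'" using mem by auto
        thus ?thesis using uy y' l unfolding lf_def by (metis order.strict_trans)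
      qed
    qed
  qed

  have L_rt: "rt T' u v \<longleftrightarrow> rt T u v" if uv: "(u,v)\<in>T" "(u,v)\<noteq>(a,i)" for u v
  proof
    assume "rt T' u v"
    then obtain y' where y': "y'>v" "(u,y')\<in>T'" unfolding rt_def by blast
    show "rt T u v"
    proof (cases "(u,y')\<in>T")
      case True thus ?thesis using y' unfolding rt_def by blast
    next
      case False
      hence "u = R" "y' = c" using y' mem by auto
      hence "(R,v)\<in>T" "v < i" using uv y' cxy by auto
      thus ?thesis using rowR by blast
    qed
  next
    assume "rt T u v"
    then obtain y' where y': "y'>v" "(u,y')\<in>T" unfolding rt_def by blast
    show "rt T' u v"
    proof (cases "(u,y') = (a,i)")
      case False thus ?thesis using y' mem unfolding rt_def by blast
    next
      case True
      hence "u = a" "v < i" using y' by auto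
      moreover have "(a,b)\<in>T'" using b mem by auto
      ultimately show ?thesis using b unfolding rt_def by (metis order.strict_trans)
    qed
  qed

  have L_bl: "bl T' u v \<longleftrightarrow> bl T u v" if uv: "(u,v)\<in>T" "(u,v)\<noteq>(a,i)" for u v
  proof
    assume "bl T' u v"
    then obtain x' where x': "x'>u" "(x',v)\<in>T'" unfolding bl_def by blast
    show "bl T u v"
    proof (cases "(x',v)\<in>T")
      case True thus ?thesis using x' unfolding bl_def by blast
    next
      case False
      hence "x' = R" "v = c" using x' mem by auto
      thus ?thesis using x' cxy unfolding bl_def by (metis order.strict_trans)
    qed
  next
    assume "bl T u v"
    then obtain x' where x': "x'>u" "(x',v)\<in>T" unfolding bl_def by blast
    show "bl T' u v"
    proof (cases "(x',v) = (a,i)")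
      case False thus ?thesis using x' mem unfolding bl_def by blast
    next
      case True
      hence "v = i" "u < a" using x' by auto
      moreover have "(i,i)\<in>T'" using ii mem aT by auto
      ultimately show ?thesis using aT unfolding bl_def by (metis order.strict_trans)
    qed
  qed

  have sp_ab: "\<not> ab T' i i" "lf T' i i" if "\<not> K"
  proof -
    show "\<not> ab T' i i"
    proof
      assume "ab T' i i"
      then obtain x' where x': "x'<i" "(x',i)\<in>T'" unfolding ab_def by blast
      have "(x',i)\<in>T" "x' \<noteq> a" using x' mem ci by auto
      moreover have "\<not> x' < a" using that \<open>(x',i)\<in>T\<close> unfolding K_def by blast
      ultimately show False using agap x' by (metis linorder_neqE_nat)
    qed
    show "lf T' i i" using that mem cxy unfolding R_def lf_def by auto
  qed
  have s_ab: "ab T' R c" using cxy mem ci unfolding ab_def by auto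
  have s_lf: "\<not> lf T' R c"
  proof
    assume "lf T' R c"
    then obtain y' where "y'<c" "(R,y')\<in>T'" unfolding lf_def by blast
    thus False using mem rowR cxy by auto
  qed
  have s_rt: "rt T' R c"
  proof (cases K)
    case True
    hence "(a,b)\<in>T'" "R = a" using b mem unfolding R_def by auto
    thus ?thesis using b cxy unfolding rt_def by (metis order.strict_trans)
  next
    case False
    hence "(i,i)\<in>T'" "R = i" using ii mem aT unfolding R_def by auto
    thus ?thesis using cxy unfolding rt_def by blast
  qed
  have s_bl: "bl T' R c" using cxy mem ci unfolding bl_def by auto

  have C': "CNM2 n T'"
    unfolding CNM2_def
  proof (intro conjI)
    show "T' \<subseteq> {1..n}\<times>{1..n}" using box R1 c1 unfolding T'_def by auto
    show "(1,1)\<in>T'" using r11 pne mem by auto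
    show "NA T'" unfolding NA_def
    proof (intro allI impI)
      fix u v assume uv: "(u,v)\<in>T'" "(u,v)\<noteq>(1,1)"
      show "ab T' u v \<noteq> lf T' u v"
      proof (cases "(u,v) = (R,c)")
        case True thus ?thesis using s_ab s_lf by auto
      next
        case False
        hence uvT: "(u,v)\<in>T" "(u,v)\<noteq>(a,i)" using uv mem by auto
        show ?thesis
        proof (cases "\<not>K \<and> (u,v)=(i,i)")
          case True thus ?thesis using sp_ab by auto
        next
          case False
          thus ?thesis using L_ab[OF uvT False] L_lf[OF uvT False] NA_D[OF na uvT(1) uv(2)] by simp
        qed
      qed
    qed
    show "\<forall>u\<in>{1..n}. \<exists>v. (u,v)\<in>T'"
    proof
      fix u assume "u\<in>{1..n}"
      then obtain v where v: "(u,v)\<in>T" using rows by blast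
      show "\<exists>v. (u,v)\<in>T'"
      proof (cases "(u,v) = (a,i)")
        case True thus ?thesis using b mem by (metis Pair_inject less_irrefl)
      next
        case False thus ?thesis using v mem by blast
      qed
    qed
    show "\<forall>v\<in>{1..n}. \<exists>u. (u,v)\<in>T'"
    proof
      fix v assume "v\<in>{1..n}"
      then obtain u where u: "(u,v)\<in>T" using cols by blast
      show "\<exists>u. (u,v)\<in>T'"
      proof (cases "(u,v) = (a,i)")
        case True thus ?thesis using ii aT mem by (metis Pair_inject less_irrefl)
      next
        case False thus ?thesis using u mem by blast
      qed
    qed
    show "\<forall>u v. (u,v)\<in>T' \<longrightarrow> (rt T' u v \<longleftrightarrow> bl T' u v)"
    proof (intro allI impI)
      fix u v assume uv: "(u,v)\<in>T'"
      show "rt T' u v \<longleftrightarrow> bl T' u v"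
      proof (cases "(u,v) = (R,c)")
        case True thus ?thesis using s_rt s_bl by auto
      next
        case False
        hence uvT: "(u,v)\<in>T" "(u,v)\<noteq>(a,i)" using uv mem by auto
        thus ?thesis using L_rt[OF uvT] L_bl[OF uvT] rb[OF uvT(1)] by simp
      qed
    qed
  qed
  have LV': "LV T' = LV T"
  proof (rule set_eqI)
    fix q :: pos
    obtain u v where qq: "q = (u,v)" by (cases q)
    show "q \<in> LV T' \<longleftrightarrow> q \<in> LV T"
    proof
      assume "q \<in> LV T'"
      hence h: "(u,v)\<in>T'" "\<not> rt T' u v" "\<not> bl T' u v" unfolding qq LV_def by auto
      have "(u,v) \<noteq> (R,c)" using h s_rt by auto
      hence uvT: "(u,v)\<in>T" "(u,v)\<noteq>(a,i)" using h mem by auto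
      thus "q \<in> LV T" using h L_rt[OF uvT] L_bl[OF uvT] unfolding qq LV_def by simp
    next
      assume "q \<in> LV T"
      hence h: "(u,v)\<in>T" "\<not> rt T u v" "\<not> bl T u v" unfolding qq LV_def by auto
      have "(u,v) \<noteq> (a,i)" using h pbl by auto
      hence uvT: "(u,v)\<in>T" "(u,v)\<noteq>(a,i)" using h by auto
      moreover have "(u,v)\<in>T'" using uvT mem by auto
      ultimately show "q \<in> LV T'" using h L_rt[OF uvT] L_bl[OF uvT] unfolding qq LV_def by simp
    qed
  qed
  have "T' \<noteq> T" using sT mem by auto
  thus ?thesis using C' LV' by blast
qed



lemma root_internal:
  assumes C: "CNM2 n T" and n2: "n \<ge> 2"
  shows "rt T 1 1 \<or> bl T 1 1"
proof -
  have "(2::nat) \<in> {1..n}" using n2 by simp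
  then obtain x where x: "(x,2)\<in>T" using CNM2_D(5)[OF C] by blast
  define P where "P q \<longleftrightarrow> q\<in>T \<and> q \<noteq> (1,1)" for q :: pos
  have "P (x,2)" using x unfolding P_def by simp
  from ex_has_least_nat[of P, OF this, of "\<lambda>q. fst q + snd q"]
  obtain q where Pq: "P q" and qmin: "\<And>q'. P q' \<Longrightarrow> fst q + snd q \<le> fst q' + snd q'" by blast
  obtain u v where qq: "q = (u,v)" by (cases q)
  have uv: "(u,v)\<in>T" "(u,v)\<noteq>(1,1)" using Pq qq unfolding P_def by auto
  show ?thesis
  proof (cases "ab T u v")
    case True
    then obtain x' where x': "x'<u" "(x',v)\<in>T" unfolding ab_def by blast
    have "\<not> P (x',v)" using qmin[of "(x',v)"] qq x' by auto
    hence "x' = 1" "v = 1" using x' unfolding P_def by auto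
    hence "bl T 1 1" using uv x' unfolding bl_def by auto
    thus ?thesis by simp
  next
    case False
    hence "lf T u v" using NA_D[OF CNM2_D(3)[OF C] uv] by simp
    then obtain y' where y': "y'<v" "(u,y')\<in>T" unfolding lf_def by blast
    have "\<not> P (u,y')" using qmin[of "(u,y')"] qq y' by auto
    hence "u = 1" "y' = 1" using y' unfolding P_def by auto
    hence "rt T 1 1" using uv y' unfolding rt_def by auto
    thus ?thesis by simp
  qed
qed

theorem lemma3p2:
  fixes n :: nat and P :: "pos set"
  assumes "n \<ge> 2"
    and "is_perm_matrix n P"
    and "\<exists>!M. is_CNM n M \<and> leaf_matrix M = P"
  shows "\<forall>i \<in> {1..n}. (i, i) \<notin> P"
proof (intro ballI notI)
  fix i assume i: "i \<in> {1..n}" and iP: "(i,i) \<in> P"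
  obtain M where M: "is_CNM n M" "leaf_matrix M = P"
    and uniq: "\<And>M'. is_CNM n M' \<and> leaf_matrix M' = P \<Longrightarrow> M' = M"
    using assms(3) by blast
  have C: "CNM2 n M" using M(1) is_CNM_iff by blast
  have LM: "LV M = P" using M(2) CNM2_leaf[OF C] by simp
  have h: "(i,i)\<in>M" "\<not> rt M i i" "\<not> bl M i i" using iP LM unfolding LV_def by auto
  have i2: "i \<ge> 2"
  proof (rule ccontr)
    assume "\<not> i \<ge> 2"
    hence "i = 1" using i by auto
    thus False using root_internal[OF C assms(1)] h by simp
  qed
  show False
  proof (cases "lf M i i")
    case False
    from caseA[OF C h(1) i2 h(2) h(3) False]
    obtain T' where T': "CNM2 n T'" "LV T' = LV M" "T' \<noteq> M" by blast
    have "is_CNM n T'" using T'(1) is_CNM_iff by blast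
    moreover have "leaf_matrix T' = P" using CNM2_leaf[OF T'(1)] T'(2) LM by simp
    ultimately have "T' = M" using uniq by blast
    thus False using T'(3) by simp
  next
    case True
    have ne: "(i,i)\<noteq>(1,1)" using i2 by auto
    have nab: "\<not> ab M i i" using NA_D[OF CNM2_D(3)[OF C] h(1) ne] True by simp
    have C2: "CNM2 n (tr M)" by (rule tr_CNM2[OF C])
    have "(i,i)\<in>tr M" "\<not> rt (tr M) i i" "\<not> bl (tr M) i i" "\<not> lf (tr M) i i"
      using h nab by (simp_all add: tr_rt tr_bl tr_lf)
    from caseA[OF C2 this(1) i2 this(2,3,4)]
    obtain T' where T': "CNM2 n T'" "LV T' = LV (tr M)" "T' \<noteq> tr M" by blast
    have C3: "CNM2 n (tr T')" by (rule tr_CNM2[OF T'(1)])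
    have "LV (tr T') = LV M" using T'(2) by (simp add: tr_LV)
    hence "leaf_matrix (tr T') = P" using CNM2_leaf[OF C3] LM by simp
    moreover have "is_CNM n (tr T')" using C3 is_CNM_iff by blast
    ultimately have "tr T' = M" using uniq by blast
    hence "T' = tr M" by (metis tr_tr)
    thus False using T'(3) by simp
  qed
qed

end
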